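(* The edge topology is not symmetric in general: there exist a scene (number of agents $N_a\ge 2$, horizon $T_f\ge 2$, current poses $(p_n,\theta_n)\in\mathbb{R}^2\times\mathbb{R}$ and future trajectories $Y_n=(y_n^1,\dots,y_n^{T_f})$, $y_n^t\in\mathbb{R}^2$) and indices $i\neq j$ such that $e_{ij}\neq e_{ji}$, where $e_{ij}$ is defined as in the context.
   Context: For $\alpha\in\mathbb{R}$, $R(\alpha)$ denotes the $2\times 2$ counterclockwise rotation matrix by angle $\alpha$. The local coordinate map of agent $n$ is $f^n(y)=R(-\theta_n)(y-p_n)$ for $y\in\mathbb{R}^2$, and the lateral coordinate $\ell^n(y)$ is the second component of $f^n(y)$. For agents $i,j$, an observer agent $n$, and a step $t\in\{2,\dots,T_f\}$, the intertwine indicator $I^{(n)}_t(i,j)$ equals $1$ if the closed line segment in $\mathbb{R}^2$ from $(t-1,\ell^n(y_i^{t-1}))$ to $(t,\ell^n(y_i^{t}))$ intersects the closed line segment from $(t-1,\ell^n(y_j^{t-1}))$ to $(t,\ell^n(y_j^{t}))$, and $0$ otherwise. The edge topology is $e_{ij}=\max_{2\le t\le T_f} I^{(i)}_t(i,j)\in\{0,1\}$, i.e. the interaction of agent $j$ with agent $i$ is assessed in agent $i$'s local frame. *)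

theory Defs
  imports "HOL-Analysis.Analysis"
begin

definition rot :: "real \<Rightarrow> real \<times> real \<Rightarrow> real \<times> real" where
  "rot \<alpha> v = (cos \<alpha> * fst v - sin \<alpha> * snd v, sin \<alpha> * fst v + cos \<alpha> * snd v)"

definition local_coord :: "real \<times> real \<Rightarrow> real \<Rightarrow> real \<times> real \<Rightarrow> real \<times> real" where
  "local_coord p \<theta> y = rot (- \<theta>) (y - p)"

definition lateral :: "real \<times> real \<Rightarrow> real \<Rightarrow> real \<times> real \<Rightarrow> real" where
  "lateral p \<theta> y = snd (local_coord p \<theta> y)"

text \<open>Intertwine indicator I^(n)_t(i,j). Scene: p n, th n are the pose of agent n,
  y n t is the position of agent n at future step t.\<close>
definition intertwine ::
  "(nat \<Rightarrow> real \<times> real) \<Rightarrow> (nat \<Rightarrow> real) \<Rightarrow> (nat \<Rightarrow> nat \<Rightarrow> real \<times> real)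
    \<Rightarrow> nat \<Rightarrow> nat \<Rightarrow> nat \<Rightarrow> nat \<Rightarrow> nat" where
  "intertwine p th y n t i j =
     (if closed_segment (real (t - 1), lateral (p n) (th n) (y i (t - 1)))
                        (real t, lateral (p n) (th n) (y i t))
         \<inter> closed_segment (real (t - 1), lateral (p n) (th n) (y j (t - 1)))
                        (real t, lateral (p n) (th n) (y j t)) \<noteq> {}
      then 1 else 0)"

definition edge ::
  "nat \<Rightarrow> (nat \<Rightarrow> real \<times> real) \<Rightarrow> (nat \<Rightarrow> real) \<Rightarrow> (nat \<Rightarrow> nat \<Rightarrow> real \<times> real)
    \<Rightarrow> nat \<Rightarrow> nat \<Rightarrow> nat" where
  "edge Tf p th y i j = Max ((\<lambda>t. intertwine p th y i t i j) ` {2..Tf})"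

end

theory Submission
  imports Defs
begin

lemma seg_disj: "closed_segment ((1::real), (0::real)) (2, 0) \<inter> closed_segment (1, 1) (2, 1) = {}"
  by (auto simp: closed_segment_def)

theorem theorem3:
  shows "\<exists>(Na::nat) (Tf::nat) (p::nat \<Rightarrow> real \<times> real) (th::nat \<Rightarrow> real)
            (y::nat \<Rightarrow> nat \<Rightarrow> real \<times> real) (i::nat) (j::nat).
           2 \<le> Na \<and> 2 \<le> Tf \<and> i < Na \<and> j < Na \<and> i \<noteq> j \<and>
           edge Tf p th y i j \<noteq> edge Tf p th y j i"
proof -
  define th :: "nat \<Rightarrow> real" where "th = (\<lambda>n. if n = 0 then 0 else pi/2)"
  define y :: "nat \<Rightarrow> nat \<Rightarrow> real \<times> real" where "y = (\<lambda>n t. if n = 0 then (0,0) else (0,1))"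
  have e01: "edge 2 (\<lambda>_. 0) th y 0 1 = 0"
    unfolding edge_def intertwine_def lateral_def local_coord_def rot_def th_def y_def
    using seg_disj by simp
  have e10: "edge 2 (\<lambda>_. 0) th y 1 0 = 1"
    unfolding edge_def intertwine_def lateral_def local_coord_def rot_def th_def y_def
    by simp
  show ?thesis
    apply (rule exI[of _ 2], rule exI[of _ 2], rule exI[of _ "\<lambda>_. 0"], rule exI[of _ th],
           rule exI[of _ y], rule exI[of _ 0], rule exI[of _ 1])
    using e01 e10 by simp
qed

end
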